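(* Let $l\ge 1$ and let $X_l,\dots,X_1$ be nonempty sets. Then the monoid $M(X_l)\circ\cdots\circ M(X_1)$ is isomorphic to the monoid $\mathrm{Ell}(r_0,T(|X_l|,\dots,|X_1|))$; an isomorphism is given by restricting an elliptic contraction to the set of leaves $X_l\times\cdots\times X_1$.
   Context: Rooted tree, depth, father/son and elliptic contraction: a rooted tree $(r_0,T)$ is a tree with a distinguished vertex $r_0$; $\mathrm{dep}(v)=d_T(r_0,v)$ (geodesic distance); an elliptic contraction is a map on vertices which does not increase geodesic distance and preserves depth. $\mathrm{Ell}(r_0,T)$ is the monoid of all elliptic contractions of $(r_0,T)$ into itself under composition (maps written on the right). $T(n_l,\dots,n_1)$ is the rooted uniformly branching tree of depth $l$ in which every vertex at depth $i-1$ has exactly $n_i$ sons; its vertex set is represented as $\{r_0\}\cup\bigcup_{i=1}^l X_i\times\cdots\times X_1$ with $|X_i|=n_i$, where $(x_i,\dots,x_1)$ is a son of $(x_{i-1},\dots,x_1)$ and each $(x_1)$ is a son of $r_0$. For $X=X_l\times\cdots\times X_1$, let $\pi_{[i,1]}:X\to X_i\times\cdots\times X_1$ be the projection on the last $i$ components. $M(X_l)\circ\cdots\circ M(X_1)$ denotes the monoid (under composition) of all full transformations $\varphi$ of $X_l\times\cdots\times X_1$ that are sequential: for every $i$, if $x,x'$ have the same last $i$ components then so do $x\varphi$ and $x'\varphi$. *)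

theory Defs
  imports "HOL-Library.FuncSet" "HOL-Algebra.Group"
begin

text \<open>Vertices of T(|X_l|,...,|X_1|): the root is [] and a vertex at depth i is the
list [x_1, ..., x_i] with x_j in X j (components stored from depth 1 downwards, i.e.
the tuple (x_i,...,x_1) of the paper is stored reversed).\<close>

definition tverts :: "(nat \<Rightarrow> 'a set) \<Rightarrow> nat \<Rightarrow> 'a list set" where
  "tverts X l = {xs. length xs \<le> l \<and> (\<forall>j < length xs. xs ! j \<in> X (Suc j))}"

definition tleaves :: "(nat \<Rightarrow> 'a set) \<Rightarrow> nat \<Rightarrow> 'a list set" where
  "tleaves X l = {xs \<in> tverts X l. length xs = l}"

definition tadj :: "(nat \<Rightarrow> 'a set) \<Rightarrow> nat \<Rightarrow> 'a list \<Rightarrow> 'a list \<Rightarrow> bool" where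
  "tadj X l u v \<longleftrightarrow> u \<in> tverts X l \<and> v \<in> tverts X l \<and>
     (\<exists>x. v = u @ [x] \<or> u = v @ [x])"

definition tdist :: "(nat \<Rightarrow> 'a set) \<Rightarrow> nat \<Rightarrow> 'a list \<Rightarrow> 'a list \<Rightarrow> nat" where
  "tdist X l u v = (LEAST n. \<exists>ps. length ps = Suc n \<and> ps ! 0 = u \<and> ps ! n = v \<and>
       (\<forall>i < n. tadj X l (ps ! i) (ps ! Suc i)))"

definition tdep :: "(nat \<Rightarrow> 'a set) \<Rightarrow> nat \<Rightarrow> 'a list \<Rightarrow> nat" where
  "tdep X l v = tdist X l [] v"

definition Ell :: "(nat \<Rightarrow> 'a set) \<Rightarrow> nat \<Rightarrow> ('a list \<Rightarrow> 'a list) set" where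
  "Ell X l = {f \<in> tverts X l \<rightarrow>\<^sub>E tverts X l.
     (\<forall>u \<in> tverts X l. \<forall>v \<in> tverts X l. tdist X l (f u) (f v) \<le> tdist X l u v) \<and>
     (\<forall>v \<in> tverts X l. tdep X l (f v) = tdep X l v)}"

text \<open>Maps written on the right: x(f g) = (x f) g.\<close>
definition Ell_monoid :: "(nat \<Rightarrow> 'a set) \<Rightarrow> nat \<Rightarrow> ('a list \<Rightarrow> 'a list) monoid" where
  "Ell_monoid X l = \<lparr>carrier = Ell X l,
     mult = (\<lambda>f g. compose (tverts X l) g f), one = restrict id (tverts X l)\<rparr>"

text \<open>Sequential transformations of X_l x ... x X_1; "the last i components" of
(x_l,...,x_1) are (x_i,...,x_1), i.e. take i of our list.\<close>
definition Seq :: "(nat \<Rightarrow> 'a set) \<Rightarrow> nat \<Rightarrow> ('a list \<Rightarrow> 'a list) set" where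
  "Seq X l = {\<phi> \<in> tleaves X l \<rightarrow>\<^sub>E tleaves X l.
     \<forall>i \<le> l. \<forall>x \<in> tleaves X l. \<forall>x' \<in> tleaves X l.
        take i x = take i x' \<longrightarrow> take i (\<phi> x) = take i (\<phi> x')}"

definition Seq_monoid :: "(nat \<Rightarrow> 'a set) \<Rightarrow> nat \<Rightarrow> ('a list \<Rightarrow> 'a list) monoid" where
  "Seq_monoid X l = \<lparr>carrier = Seq X l,
     mult = (\<lambda>f g. compose (tleaves X l) g f), one = restrict id (tleaves X l)\<rparr>"

end

theory Submission
  imports Defs
begin

fun lcp :: "'a list \<Rightarrow> 'a list \<Rightarrow> nat" where
  "lcp (x#xs) (y#ys) = (if x = y then Suc (lcp xs ys) else 0)"
| "lcp _ _ = 0"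

lemma lcp_le1: "lcp u v \<le> length u"
  by (induction u v rule: lcp.induct) auto

lemma lcp_le2: "lcp u v \<le> length v"
  by (induction u v rule: lcp.induct) auto

lemma lcp_take: "take (lcp u v) u = take (lcp u v) v"
  by (induction u v rule: lcp.induct) auto

lemma lcp_ge: "take i u = take i v \<Longrightarrow> i \<le> length u \<Longrightarrow> i \<le> length v \<Longrightarrow> i \<le> lcp u v"
proof (induction u v arbitrary: i rule: lcp.induct)
  case (1 x xs y ys)
  then show ?case by (cases i) auto
qed auto

lemma lcp_self: "lcp v v = length v"
  by (induction v) auto

lemma lcp_sym: "lcp u v = lcp v u"
  by (induction u v rule: lcp.induct) auto

lemma lcp_take_eq: "i \<le> lcp u v \<Longrightarrow> take i u = take i v"
  by (metis lcp_take min.absorb1 take_take)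

lemma lcp_snoc: "lcp u v \<le> lcp (u @ [x]) v \<and> lcp (u @ [x]) v \<le> Suc (lcp u v)"
proof (induction u arbitrary: v)
  case Nil
  then show ?case by (cases v) auto
next
  case (Cons a u)
  then show ?case by (cases v) auto
qed

inductive walk :: "(nat \<Rightarrow> 'a set) \<Rightarrow> nat \<Rightarrow> nat \<Rightarrow> 'a list \<Rightarrow> 'a list \<Rightarrow> bool"
  for X l where
  w0: "walk X l 0 u u"
| wS: "tadj X l u w \<Longrightarrow> walk X l n w v \<Longrightarrow> walk X l (Suc n) u v"

lemma walk_ps: "walk X l n u v \<Longrightarrow> \<exists>ps. length ps = Suc n \<and> ps ! 0 = u \<and> ps ! n = v \<and>
       (\<forall>i < n. tadj X l (ps ! i) (ps ! Suc i))"
proof (induction rule: walk.induct)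
  case (w0 u)
  then show ?case by (intro exI[of _ "[u]"]) auto
next
  case (wS u w n v)
  then obtain ps where ps: "length ps = Suc n" "ps ! 0 = w" "ps ! n = v"
       "\<forall>i < n. tadj X l (ps ! i) (ps ! Suc i)" by blast
  show ?case
  proof (intro exI[of _ "u # ps"] conjI allI impI)
    fix i assume "i < Suc n"
    then show "tadj X l ((u # ps) ! i) ((u # ps) ! Suc i)"
      using ps wS(1) by (cases i) auto
  qed (use ps in auto)
qed

lemma ps_walk: "length ps = Suc n \<Longrightarrow> (\<forall>i < n. tadj X l (ps ! i) (ps ! Suc i)) \<Longrightarrow>
   walk X l n (ps ! 0) (ps ! n)"
proof (induction n arbitrary: ps)
  case 0
  then show ?case by (auto intro: walk.intros)
next
  case (Suc n)
  then obtain a ps' where p: "ps = a # ps'" by (cases ps) auto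
  have "\<forall>i < n. tadj X l (ps' ! i) (ps' ! Suc i)"
  proof (intro allI impI)
    fix i assume "i < n"
    then show "tadj X l (ps' ! i) (ps' ! Suc i)" using Suc.prems(2) p
      by (metis Suc_mono nth_Cons_Suc)
  qed
  then have "walk X l n (ps' ! 0) (ps' ! n)"
    using Suc.IH[of ps'] Suc.prems p by auto
  moreover have "tadj X l a (ps' ! 0)" using Suc.prems(2) p by force
  ultimately show ?case using p by (auto intro: walk.intros)
qed

lemma tdist_walk: "tdist X l u v = (LEAST n. walk X l n u v)"
proof -
  have "(\<lambda>n. \<exists>ps. length ps = Suc n \<and> ps ! 0 = u \<and> ps ! n = v \<and>
       (\<forall>i < n. tadj X l (ps ! i) (ps ! Suc i))) = (\<lambda>n. walk X l n u v)"
  proof (rule ext, rule iffI)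
    fix n assume "\<exists>ps. length ps = Suc n \<and> ps ! 0 = u \<and> ps ! n = v \<and>
       (\<forall>i < n. tadj X l (ps ! i) (ps ! Suc i))"
    then obtain ps where "length ps = Suc n" "ps ! 0 = u" "ps ! n = v"
       "\<forall>i < n. tadj X l (ps ! i) (ps ! Suc i)" by blast
    then show "walk X l n u v" using ps_walk by metis
  qed (rule walk_ps)
  then show ?thesis unfolding tdist_def by simp
qed

lemma walk_trans: "walk X l m u w \<Longrightarrow> walk X l n w v \<Longrightarrow> walk X l (m + n) u v"
  by (induction rule: walk.induct) (auto intro: walk.intros)

lemma tadj_sym: "tadj X l u v \<Longrightarrow> tadj X l v u"
  unfolding tadj_def by blast

lemma walk1: "tadj X l u v \<Longrightarrow> walk X l 1 u v"
  by (auto intro: walk.intros)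

lemma walk_sym: "walk X l n u v \<Longrightarrow> walk X l n v u"
proof (induction rule: walk.induct)
  case (w0 u) then show ?case by (rule walk.w0)
next
  case (wS u w n v)
  have "walk X l (n + 1) v u" using walk_trans[OF wS(3) walk1[OF tadj_sym[OF wS(1)]]] .
  then show ?case by simp
qed

definition G :: "'a list \<Rightarrow> 'a list \<Rightarrow> int" where
  "G t w = int (length w) + int (length t) - 2 * int (lcp w t)"

lemma G_adj: "tadj X l u w \<Longrightarrow> G t u \<le> G t w + 1"
proof -
  assume "tadj X l u w"
  then obtain x where "w = u @ [x] \<or> u = w @ [x]" unfolding tadj_def by blast
  then show ?thesis using lcp_snoc[of u t x] lcp_snoc[of w t x] unfolding G_def by auto
qed

lemma walk_G: "walk X l n u v \<Longrightarrow> G t u \<le> int n + G t v"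
proof (induction rule: walk.induct)
  case (wS u w n v)
  then show ?case using G_adj[OF wS(1), of t] by simp
qed simp

lemma take_tverts: "v \<in> tverts X l \<Longrightarrow> take k v \<in> tverts X l"
  unfolding tverts_def by auto

lemma walk_up: "v \<in> tverts X l \<Longrightarrow> k \<le> length v \<Longrightarrow> walk X l (length v - k) (take k v) v"
proof (induction "length v - k" arbitrary: k)
  case 0
  then show ?case by (auto intro: walk.intros)
next
  case (Suc d)
  have k: "k < length v" using Suc by auto
  have d: "d = length v - Suc k" using Suc.hyps(2) by simp
  have IH: "walk X l d (take (Suc k) v) v" using Suc.hyps(1)[OF d] Suc.prems(1) k d by simp
  have "take (Suc k) v = take k v @ [v ! k]" using k by (simp add: take_Suc_conv_app_nth)
  then have "tadj X l (take k v) (take (Suc k) v)"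
    unfolding tadj_def using take_tverts[OF Suc.prems(1)] by blast
  then show ?case using IH Suc.hyps(2) by (metis walk.wS)
qed

lemma tdist_formula:
  assumes "u \<in> tverts X l" "v \<in> tverts X l"
  shows "tdist X l u v = length u + length v - 2 * lcp u v"
proof -
  let ?c = "lcp u v"
  have c1: "?c \<le> length u" "?c \<le> length v" using lcp_le1 lcp_le2 by auto
  have "walk X l (length u - ?c) u (take ?c u)"
    using walk_sym[OF walk_up[OF assms(1) c1(1)]] .
  moreover have "walk X l (length v - ?c) (take ?c v) v" using walk_up[OF assms(2) c1(2)] .
  ultimately have "walk X l ((length u - ?c) + (length v - ?c)) u v"
    using walk_trans lcp_take[of u v] by metis
  moreover have "(length u - ?c) + (length v - ?c) = length u + length v - 2 * ?c"
    using c1 by simp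
  ultimately have W: "walk X l (length u + length v - 2 * ?c) u v" by simp
  have "\<And>n. walk X l n u v \<Longrightarrow> length u + length v - 2 * ?c \<le> n"
  proof -
    fix n assume "walk X l n u v"
    from walk_G[OF this, of v] show "length u + length v - 2 * ?c \<le> n"
      unfolding G_def using lcp_self[of v] lcp_sym[of u v] by auto
  qed
  then show ?thesis unfolding tdist_walk using W
    by (intro Least_equality) auto
qed


lemma nil_tverts: "[] \<in> tverts X l"
  unfolding tverts_def by auto

lemma tverts_len: "v \<in> tverts X l \<Longrightarrow> length v \<le> l"
  unfolding tverts_def by auto

lemma tdep_eq: "v \<in> tverts X l \<Longrightarrow> tdep X l v = length v"
  unfolding tdep_def using tdist_formula[OF nil_tverts] by simp

lemma leaves_sub: "tleaves X l \<subseteq> tverts X l"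
  unfolding tleaves_def by auto

lemma leaf_len: "x \<in> tleaves X l \<Longrightarrow> length x = l"
  unfolding tleaves_def by auto

lemma leafI: "x \<in> tverts X l \<Longrightarrow> length x = l \<Longrightarrow> x \<in> tleaves X l"
  unfolding tleaves_def by auto

lemma Ell_iff: "f \<in> Ell X l \<longleftrightarrow> f \<in> tverts X l \<rightarrow>\<^sub>E tverts X l \<and>
   (\<forall>v \<in> tverts X l. length (f v) = length v) \<and>
   (\<forall>u \<in> tverts X l. \<forall>v \<in> tverts X l. lcp u v \<le> lcp (f u) (f v))"
proof
  assume f: "f \<in> Ell X l"
  then have P: "f \<in> tverts X l \<rightarrow>\<^sub>E tverts X l" unfolding Ell_def by blast
  then have fv: "\<And>v. v \<in> tverts X l \<Longrightarrow> f v \<in> tverts X l" by auto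
  have dep: "\<forall>v \<in> tverts X l. tdep X l (f v) = tdep X l v" using f unfolding Ell_def by blast
  have len: "\<forall>v \<in> tverts X l. length (f v) = length v"
  proof
    fix v assume v: "v \<in> tverts X l"
    show "length (f v) = length v" using dep v tdep_eq[OF v] tdep_eq[OF fv[OF v]] by simp
  qed
  have "\<forall>u \<in> tverts X l. \<forall>v \<in> tverts X l. lcp u v \<le> lcp (f u) (f v)"
  proof (intro ballI)
    fix u v assume uv: "u \<in> tverts X l" "v \<in> tverts X l"
    then have "tdist X l (f u) (f v) \<le> tdist X l u v" using f unfolding Ell_def by blast
    then have "length (f u) + length (f v) - 2 * lcp (f u) (f v) \<le> length u + length v - 2 * lcp u v"
      using tdist_formula[OF uv] tdist_formula[OF fv[OF uv(1)] fv[OF uv(2)]] by simp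
    moreover have "length (f u) = length u" "length (f v) = length v" using len uv by auto
    ultimately show "lcp u v \<le> lcp (f u) (f v)"
      using lcp_le1[of u v] lcp_le2[of u v] lcp_le1[of "f u" "f v"] lcp_le2[of "f u" "f v"]
      by linarith
  qed
  then show "f \<in> tverts X l \<rightarrow>\<^sub>E tverts X l \<and>
   (\<forall>v \<in> tverts X l. length (f v) = length v) \<and>
   (\<forall>u \<in> tverts X l. \<forall>v \<in> tverts X l. lcp u v \<le> lcp (f u) (f v))" using P len by blast
next
  assume A: "f \<in> tverts X l \<rightarrow>\<^sub>E tverts X l \<and>
   (\<forall>v \<in> tverts X l. length (f v) = length v) \<and>
   (\<forall>u \<in> tverts X l. \<forall>v \<in> tverts X l. lcp u v \<le> lcp (f u) (f v))"
  then have fv: "\<And>v. v \<in> tverts X l \<Longrightarrow> f v \<in> tverts X l" by auto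
  have "\<forall>u \<in> tverts X l. \<forall>v \<in> tverts X l. tdist X l (f u) (f v) \<le> tdist X l u v"
  proof (intro ballI)
    fix u v assume uv: "u \<in> tverts X l" "v \<in> tverts X l"
    have "length (f u) = length u" "length (f v) = length v" "lcp u v \<le> lcp (f u) (f v)"
      using A uv by auto
    then have "length (f u) + length (f v) - 2 * lcp (f u) (f v) \<le> length u + length v - 2 * lcp u v"
      using lcp_le1[of u v] lcp_le2[of u v] lcp_le1[of "f u" "f v"] lcp_le2[of "f u" "f v"]
      by linarith
    then show "tdist X l (f u) (f v) \<le> tdist X l u v"
      using tdist_formula[OF uv] tdist_formula[OF fv[OF uv(1)] fv[OF uv(2)]] by simp
  qed
  moreover have "\<forall>v \<in> tverts X l. tdep X l (f v) = tdep X l v"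
  proof
    fix v assume v: "v \<in> tverts X l"
    show "tdep X l (f v) = tdep X l v" using A v tdep_eq[OF v] tdep_eq[OF fv[OF v]] by simp
  qed
  ultimately show "f \<in> Ell X l" using A unfolding Ell_def by blast
qed

lemma Seq_iff: "\<phi> \<in> Seq X l \<longleftrightarrow> \<phi> \<in> tleaves X l \<rightarrow>\<^sub>E tleaves X l \<and>
   (\<forall>x \<in> tleaves X l. \<forall>x' \<in> tleaves X l. lcp x x' \<le> lcp (\<phi> x) (\<phi> x'))"
proof
  assume A: "\<phi> \<in> Seq X l"
  then have P: "\<phi> \<in> tleaves X l \<rightarrow>\<^sub>E tleaves X l" unfolding Seq_def by blast
  have "\<forall>x \<in> tleaves X l. \<forall>x' \<in> tleaves X l. lcp x x' \<le> lcp (\<phi> x) (\<phi> x')"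
  proof (intro ballI)
    fix x x' assume xx: "x \<in> tleaves X l" "x' \<in> tleaves X l"
    have c: "lcp x x' \<le> l" using lcp_le1[of x x'] leaf_len[OF xx(1)] by simp
    have "take (lcp x x') (\<phi> x) = take (lcp x x') (\<phi> x')"
      using A xx c lcp_take[of x x'] unfolding Seq_def by blast
    moreover have "\<phi> x \<in> tleaves X l" "\<phi> x' \<in> tleaves X l" using P xx by auto
    ultimately show "lcp x x' \<le> lcp (\<phi> x) (\<phi> x')"
      using lcp_ge[of "lcp x x'" "\<phi> x" "\<phi> x'"] leaf_len[of "\<phi> x"] leaf_len[of "\<phi> x'"] c by simp
  qed
  then show "\<phi> \<in> tleaves X l \<rightarrow>\<^sub>E tleaves X l \<and>
   (\<forall>x \<in> tleaves X l. \<forall>x' \<in> tleaves X l. lcp x x' \<le> lcp (\<phi> x) (\<phi> x'))" using P by blast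
next
  assume A: "\<phi> \<in> tleaves X l \<rightarrow>\<^sub>E tleaves X l \<and>
   (\<forall>x \<in> tleaves X l. \<forall>x' \<in> tleaves X l. lcp x x' \<le> lcp (\<phi> x) (\<phi> x'))"
  have "\<forall>i \<le> l. \<forall>x \<in> tleaves X l. \<forall>x' \<in> tleaves X l.
        take i x = take i x' \<longrightarrow> take i (\<phi> x) = take i (\<phi> x')"
  proof (intro allI impI ballI)
    fix i x x' assume i: "i \<le> l" and xx: "x \<in> tleaves X l" "x' \<in> tleaves X l"
      and t: "take i x = take i x'"
    have "i \<le> lcp x x'" using lcp_ge[OF t] i leaf_len[OF xx(1)] leaf_len[OF xx(2)] by simp
    then have "i \<le> lcp (\<phi> x) (\<phi> x')" using A xx by force
    then show "take i (\<phi> x) = take i (\<phi> x')" by (rule lcp_take_eq)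
  qed
  then show "\<phi> \<in> Seq X l" using A unfolding Seq_def by blast
qed


lemma ext_leaf:
  assumes ne: "\<forall>i\<in>{1..l}. X i \<noteq> {}" and v: "v \<in> tverts X l"
  shows "\<exists>x \<in> tleaves X l. take (length v) x = v"
proof -
  define x where "x = v @ map (\<lambda>j. SOME a. a \<in> X (Suc j)) [length v..<l]"
  have lv: "length v \<le> l" using tverts_len[OF v] .
  have lx: "length x = l" unfolding x_def using lv by simp
  have "\<forall>j < length x. x ! j \<in> X (Suc j)"
  proof (intro allI impI)
    fix j assume j: "j < length x"
    show "x ! j \<in> X (Suc j)"
    proof (cases "j < length v")
      case True
      then show ?thesis using v unfolding x_def tverts_def by (simp add: nth_append)
    next
      case False
      then have "x ! j = (SOME a. a \<in> X (Suc j))" unfolding x_def using j lx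
        by (simp add: nth_append)
      moreover have "X (Suc j) \<noteq> {}" using ne j lx by auto
      ultimately show ?thesis by (simp add: some_in_eq)
    qed
  qed
  then have "x \<in> tleaves X l" unfolding tleaves_def tverts_def using lx by simp
  moreover have "take (length v) x = v" unfolding x_def by simp
  ultimately show ?thesis by blast
qed

lemma Ell_det:
  assumes f: "f \<in> Ell X l" and v: "v \<in> tverts X l" and x: "x \<in> tleaves X l"
    and t: "take (length v) x = v"
  shows "f v = take (length v) (f x)"
proof -
  have xv: "x \<in> tverts X l" using x leaves_sub by blast
  have lx: "length v \<le> length x" using leaf_len[OF x] tverts_len[OF v] by simp
  have "length v \<le> lcp v x" using lcp_ge[of "length v" v x] t lx by simp
  also have "\<dots> \<le> lcp (f v) (f x)" using f v xv unfolding Ell_iff by blast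
  finally have "take (length v) (f v) = take (length v) (f x)" by (rule lcp_take_eq)
  moreover have "length (f v) = length v" using f v unfolding Ell_iff by blast
  ultimately show ?thesis by (metis take_all order_refl)
qed

lemma Ell_leaf: "f \<in> Ell X l \<Longrightarrow> x \<in> tleaves X l \<Longrightarrow> f x \<in> tleaves X l"
proof -
  assume f: "f \<in> Ell X l" and x: "x \<in> tleaves X l"
  have xv: "x \<in> tverts X l" using x leaves_sub by blast
  have "f x \<in> tverts X l" "length (f x) = length x" using f xv unfolding Ell_iff by auto
  then show ?thesis using leafI leaf_len[OF x] by metis
qed

lemma Ell_monoid_ok: "monoid (Ell_monoid X l)"
proof (rule monoidI, unfold Ell_monoid_def monoid.simps partial_object.simps)
  fix f g assume f: "f \<in> Ell X l" and g: "g \<in> Ell X l"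
  show "compose (tverts X l) g f \<in> Ell X l" unfolding Ell_iff
  proof (intro conjI ballI)
    show "compose (tverts X l) g f \<in> tverts X l \<rightarrow>\<^sub>E tverts X l"
      using f g unfolding Ell_iff by (auto simp: compose_def)
  next
    fix v assume v: "v \<in> tverts X l"
    have fv: "f v \<in> tverts X l" using f v unfolding Ell_iff by auto
    show "length (compose (tverts X l) g f v) = length v"
      using f g v fv unfolding Ell_iff by (simp add: compose_eq)
  next
    fix u v assume u: "u \<in> tverts X l" and v: "v \<in> tverts X l"
    have fv: "f v \<in> tverts X l" "f u \<in> tverts X l" using f u v unfolding Ell_iff by auto
    have "lcp u v \<le> lcp (f u) (f v)" using f u v unfolding Ell_iff by blast
    also have "\<dots> \<le> lcp (g (f u)) (g (f v))" using g fv unfolding Ell_iff by blast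
    finally show "lcp u v \<le> lcp (compose (tverts X l) g f u) (compose (tverts X l) g f v)"
      using u v by (simp add: compose_eq)
  qed
next
  show "restrict id (tverts X l) \<in> Ell X l" unfolding Ell_iff by auto
next
  fix f g h assume f: "f \<in> Ell X l" and g: "g \<in> Ell X l" and h: "h \<in> Ell X l"
  have "f \<in> tverts X l \<rightarrow> tverts X l" using f unfolding Ell_iff by auto
  then show "compose (tverts X l) h (compose (tverts X l) g f) =
             compose (tverts X l) (compose (tverts X l) h g) f"
    by (rule compose_assoc)
next
  fix f assume f: "f \<in> Ell X l"
  then have e: "f \<in> extensional (tverts X l)" and p: "f \<in> tverts X l \<rightarrow> tverts X l"
    unfolding Ell_iff by (auto simp: PiE_iff)
  show "compose (tverts X l) f (restrict id (tverts X l)) = f"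
    using e by (auto simp: fun_eq_iff compose_def extensional_def)
  show "compose (tverts X l) (restrict id (tverts X l)) f = f"
    using e p by (auto simp: fun_eq_iff compose_def extensional_def Pi_def)
qed

lemma Seq_monoid_ok: "monoid (Seq_monoid X l)"
proof (rule monoidI, unfold Seq_monoid_def monoid.simps partial_object.simps)
  fix f g assume f: "f \<in> Seq X l" and g: "g \<in> Seq X l"
  show "compose (tleaves X l) g f \<in> Seq X l" unfolding Seq_iff
  proof (intro conjI ballI)
    show "compose (tleaves X l) g f \<in> tleaves X l \<rightarrow>\<^sub>E tleaves X l"
      using f g unfolding Seq_iff by (auto simp: compose_def)
  next
    fix u v assume u: "u \<in> tleaves X l" and v: "v \<in> tleaves X l"
    have fv: "f v \<in> tleaves X l" "f u \<in> tleaves X l" using f u v unfolding Seq_iff by auto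
    have "lcp u v \<le> lcp (f u) (f v)" using f u v unfolding Seq_iff by blast
    also have "\<dots> \<le> lcp (g (f u)) (g (f v))" using g fv unfolding Seq_iff by blast
    finally show "lcp u v \<le> lcp (compose (tleaves X l) g f u) (compose (tleaves X l) g f v)"
      using u v by (simp add: compose_eq)
  qed
next
  show "restrict id (tleaves X l) \<in> Seq X l" unfolding Seq_iff by auto
next
  fix f g h assume f: "f \<in> Seq X l" and g: "g \<in> Seq X l" and h: "h \<in> Seq X l"
  have "f \<in> tleaves X l \<rightarrow> tleaves X l" using f unfolding Seq_iff by auto
  then show "compose (tleaves X l) h (compose (tleaves X l) g f) =
             compose (tleaves X l) (compose (tleaves X l) h g) f"
    by (rule compose_assoc)
next
  fix f assume f: "f \<in> Seq X l"
  then have e: "f \<in> extensional (tleaves X l)" and p: "f \<in> tleaves X l \<rightarrow> tleaves X l"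
    unfolding Seq_iff by (auto simp: PiE_iff)
  show "compose (tleaves X l) f (restrict id (tleaves X l)) = f"
    using e by (auto simp: fun_eq_iff compose_def extensional_def)
  show "compose (tleaves X l) (restrict id (tleaves X l)) f = f"
    using e p by (auto simp: fun_eq_iff compose_def extensional_def Pi_def)
qed


lemma restr_Seq: "f \<in> Ell X l \<Longrightarrow> restrict f (tleaves X l) \<in> Seq X l"
proof -
  assume f: "f \<in> Ell X l"
  show ?thesis unfolding Seq_iff
  proof (intro conjI ballI)
    show "restrict f (tleaves X l) \<in> tleaves X l \<rightarrow>\<^sub>E tleaves X l"
      using Ell_leaf[OF f] by auto
  next
    fix x x' assume x: "x \<in> tleaves X l" and x': "x' \<in> tleaves X l"
    then have "x \<in> tverts X l" "x' \<in> tverts X l" using leaves_sub by auto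
    then have "lcp x x' \<le> lcp (f x) (f x')" using f unfolding Ell_iff by blast
    then show "lcp x x' \<le> lcp (restrict f (tleaves X l) x) (restrict f (tleaves X l) x')"
      using x x' by simp
  qed
qed

theorem proposition3p4:
  fixes X :: "nat \<Rightarrow> 'a set" and l :: nat
  assumes "l \<ge> 1" and "\<forall>i \<in> {1..l}. X i \<noteq> {}"
  shows "monoid (Ell_monoid X l) \<and> monoid (Seq_monoid X l) \<and>
         (\<lambda>f. restrict f (tleaves X l)) \<in> iso (Ell_monoid X l) (Seq_monoid X l)"
proof (intro conjI Ell_monoid_ok Seq_monoid_ok)
  let ?V = "tverts X l" and ?L = "tleaves X l" and ?r = "\<lambda>f. restrict f (tleaves X l)"
  have hom: "?r \<in> hom (Ell_monoid X l) (Seq_monoid X l)"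
  proof (rule homI, unfold Ell_monoid_def Seq_monoid_def monoid.simps partial_object.simps)
    fix f assume "f \<in> Ell X l" then show "?r f \<in> Seq X l" by (rule restr_Seq)
  next
    fix f g assume f: "f \<in> Ell X l" and g: "g \<in> Ell X l"
    show "?r (compose ?V g f) = compose ?L (?r g) (?r f)"
    proof (rule ext)
      fix x show "?r (compose ?V g f) x = compose ?L (?r g) (?r f) x"
      proof (cases "x \<in> ?L")
        case True
        then have "x \<in> ?V" using leaves_sub by auto
        then show ?thesis using True Ell_leaf[OF f True] by (simp add: compose_eq)
      next
        case False
        then show ?thesis by (simp add: compose_def)
      qed
    qed
  qed
  have inj: "inj_on ?r (Ell X l)"
  proof (rule inj_onI)
    fix f g assume f: "f \<in> Ell X l" and g: "g \<in> Ell X l" and eq: "?r f = ?r g"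
    show "f = g"
    proof (rule ext)
      fix v show "f v = g v"
      proof (cases "v \<in> ?V")
        case True
        obtain x where x: "x \<in> ?L" "take (length v) x = v" using ext_leaf[OF assms(2) True] by blast
        have "f x = g x" using fun_cong[OF eq, of x] x(1) by simp
        then show ?thesis using Ell_det[OF f True x] Ell_det[OF g True x] by simp
      next
        case False
        have "f \<in> extensional ?V" "g \<in> extensional ?V" using f g unfolding Ell_iff
          by (auto simp: PiE_iff)
        then show ?thesis using extensional_arb[OF _ False] by metis
      qed
    qed
  qed
  have surj: "Seq X l \<subseteq> ?r ` Ell X l"
  proof
    fix \<phi> assume phi: "\<phi> \<in> Seq X l"
    have phiL: "\<And>x. x \<in> ?L \<Longrightarrow> \<phi> x \<in> ?L" using phi unfolding Seq_iff by auto
    have phiE: "\<phi> \<in> extensional ?L" using phi unfolding Seq_iff by (auto simp: PiE_iff)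
    have phil: "\<And>x x'. x \<in> ?L \<Longrightarrow> x' \<in> ?L \<Longrightarrow> lcp x x' \<le> lcp (\<phi> x) (\<phi> x')"
      using phi unfolding Seq_iff by blast
    define e where "e v = (SOME x. x \<in> ?L \<and> take (length v) x = v)" for v
    have e: "\<And>v. v \<in> ?V \<Longrightarrow> e v \<in> ?L \<and> take (length v) (e v) = v"
    proof -
      fix v assume v: "v \<in> ?V"
      show "e v \<in> ?L \<and> take (length v) (e v) = v"
        unfolding e_def using ext_leaf[OF assms(2) v] by (rule someI2_bex) blast
    qed
    define f where "f = (\<lambda>v\<in>?V. take (length v) (\<phi> (e v)))"
    have fEll: "f \<in> Ell X l" unfolding Ell_iff
    proof (intro conjI ballI)
      show "f \<in> ?V \<rightarrow>\<^sub>E ?V"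
      proof (rule PiE_I)
        fix v assume v: "v \<in> ?V"
        have "\<phi> (e v) \<in> ?V" using phiL e v leaves_sub by blast
        then show "f v \<in> ?V" unfolding f_def using v take_tverts by simp
      next
        fix v assume "v \<notin> ?V" then show "f v = undefined" unfolding f_def by simp
      qed
    next
      fix v assume v: "v \<in> ?V"
      have "length (\<phi> (e v)) = l" using phiL e v leaf_len by blast
      then show "length (f v) = length v" unfolding f_def using v tverts_len[OF v] by simp
    next
      fix u v assume u: "u \<in> ?V" and v: "v \<in> ?V"
      let ?c = "lcp u v"
      have cu: "?c \<le> length u" and cv: "?c \<le> length v" using lcp_le1 lcp_le2 by auto
      have "take ?c (e u) = take ?c (e v)"
      proof -
        have "take ?c (e u) = take ?c (take (length u) (e u))" using cu by simp
        also have "\<dots> = take ?c u" using e u by simp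
        also have "\<dots> = take ?c v" by (rule lcp_take)
        also have "\<dots> = take ?c (take (length v) (e v))" using e v by simp
        also have "\<dots> = take ?c (e v)" using cv by simp
        finally show ?thesis .
      qed
      moreover have eu: "e u \<in> ?L" and ev: "e v \<in> ?L" using e u v by auto
      moreover have "?c \<le> l" using cu tverts_len[OF u] by simp
      ultimately have "?c \<le> lcp (e u) (e v)"
        using lcp_ge[of ?c "e u" "e v"] leaf_len[OF eu] leaf_len[OF ev] by simp
      also have "\<dots> \<le> lcp (\<phi> (e u)) (\<phi> (e v))" using phil eu ev by blast
      finally have "take ?c (\<phi> (e u)) = take ?c (\<phi> (e v))" by (rule lcp_take_eq)
      then have "take ?c (f u) = take ?c (f v)" unfolding f_def using u v cu cv
        by (simp add: min_absorb1 min_absorb2)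
      moreover have "length (f u) = length u" "length (f v) = length v"
      proof -
        have "length (\<phi> (e u)) = l" "length (\<phi> (e v)) = l" using phiL eu ev leaf_len by auto
        then show "length (f u) = length u" "length (f v) = length v"
          unfolding f_def using u v tverts_len[OF u] tverts_len[OF v] by auto
      qed
      ultimately show "lcp u v \<le> lcp (f u) (f v)" using lcp_ge[of ?c "f u" "f v"] cu cv by simp
    qed
    have "?r f = \<phi>"
    proof (rule ext)
      fix x show "?r f x = \<phi> x"
      proof (cases "x \<in> ?L")
        case True
        have xv: "x \<in> ?V" using True leaves_sub by auto
        have "e x \<in> ?L" "take l (e x) = x" using e[OF xv] leaf_len[OF True] by auto
        then have "e x = x" using leaf_len[of "e x"] by simp
        then show ?thesis unfolding f_def using True xv leaf_len[OF True] leaf_len[OF phiL[OF True]]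
          by simp
      next
        case False
        then show ?thesis using extensional_arb[OF phiE False] by simp
      qed
    qed
    then show "\<phi> \<in> ?r ` Ell X l" using fEll by blast
  qed
  have "?r ` Ell X l \<subseteq> Seq X l" using restr_Seq by blast
  with surj inj have "bij_betw ?r (Ell X l) (Seq X l)" unfolding bij_betw_def by blast
  then show "?r \<in> iso (Ell_monoid X l) (Seq_monoid X l)"
    unfolding iso_def using hom by (simp add: Ell_monoid_def Seq_monoid_def)
qed

end
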